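(* Fix a full-support skill distribution $p\in\Delta(\Theta)$ and two full-support perceptions $q,q'\in\Delta(\Theta)$. (a) If $q'\succsim_{LR} q$, then for every signal structure $\langle S,\pi\rangle$ and every monotone firm $A\subset\mathcal{A}_M$, $$W_A(p,q',\langle S,\pi\rangle)\ \ge\ W_A(p,q,\langle S,\pi\rangle).$$ (b) If $q'\not\succsim_{LR} q$, then there exists a signal structure $\langle S,\pi\rangle$ such that for every monotone firm $A\subset\mathcal{A}_M$, $$W_A(p,q',\langle S,\pi\rangle)\ <\ W_A(p,q,\langle S,\pi\rangle).$$
   Context: Let $\Theta\subset\mathbb{R}$ be a finite set of skill types with $|\Theta|\ge 2$. A task is a vector $a\in\mathcal{A}:=\mathbb{R}^\Theta$. A firm is a non-empty finite set $A\subset\mathcal{A}$. The firm is monotone if $A\subset\mathcal{A}_M:=\{a\in\mathbb{R}^\Theta: a(\theta')>a(\theta)\text{ whenever }\theta'>\theta\}$. A signal structure $\langle S,\pi\rangle$ consists of a non-empty finite set $S$ and a map $\pi:S\times\Theta\to[0,1]$ with $\sum_{s\in S}\pi(s|\theta)=1$ for each $\theta$, such that every $s\in S$ has $\pi(s|\theta)>0$ for some $\theta$. The true skill distribution $p$ and the perception $q$ are full-support elements of $\Delta(\Theta)$. The posterior is $q_{\langle S,\pi\rangle}(\theta|s):=q(\theta)\pi(s|\theta)/\sum_{\theta'}q(\theta')\pi(s|\theta')$. Pay of a worker with signal $s$ is $w_A(s,q,\langle S,\pi\rangle):=\max_{a\in A}\sum_{\theta}q_{\langle S,\pi\rangle}(\theta|s)a(\theta)$.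 Average pay is $W_A(p,q,\langle S,\pi\rangle):=\sum_{\theta}p(\theta)\sum_{s\in S}\pi(s|\theta)w_A(s,q,\langle S,\pi\rangle)$. Likelihood-ratio order: $q'\succsim_{LR}q$ means $q(\theta)q'(\theta')\ge q(\theta')q'(\theta)$ whenever $\theta'>\theta$. *)

theory Defs
  imports "HOL-Analysis.Analysis"
begin

text \<open>Skill types: a finite set Theta of reals. Distributions, tasks and
signal likelihoods are represented as functions; only their values on Theta
(resp. S x Theta) matter.\<close>

definition full_support :: "real set \<Rightarrow> (real \<Rightarrow> real) \<Rightarrow> bool" where
  "full_support Theta p \<longleftrightarrow> (\<forall>\<theta>\<in>Theta. p \<theta> > 0) \<and> (\<Sum>\<theta>\<in>Theta. p \<theta>) = 1"

definition signal_structure :: "real set \<Rightarrow> 's set \<Rightarrow> ('s \<Rightarrow> real \<Rightarrow> real) \<Rightarrow> bool" where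
  "signal_structure Theta S \<pi> \<longleftrightarrow>
     finite S \<and> S \<noteq> {} \<and>
     (\<forall>s\<in>S. \<forall>\<theta>\<in>Theta. 0 \<le> \<pi> s \<theta> \<and> \<pi> s \<theta> \<le> 1) \<and>
     (\<forall>\<theta>\<in>Theta. (\<Sum>s\<in>S. \<pi> s \<theta>) = 1) \<and>
     (\<forall>s\<in>S. \<exists>\<theta>\<in>Theta. \<pi> s \<theta> > 0)"

definition monotone_task :: "real set \<Rightarrow> (real \<Rightarrow> real) \<Rightarrow> bool" where
  "monotone_task Theta a \<longleftrightarrow> (\<forall>\<theta>\<in>Theta. \<forall>\<theta>'\<in>Theta. \<theta>' > \<theta> \<longrightarrow> a \<theta>' > a \<theta>)"

definition monotone_firm :: "real set \<Rightarrow> (real \<Rightarrow> real) set \<Rightarrow> bool" where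
  "monotone_firm Theta A \<longleftrightarrow> finite A \<and> A \<noteq> {} \<and> (\<forall>a\<in>A. monotone_task Theta a)"

definition posterior :: "real set \<Rightarrow> (real \<Rightarrow> real) \<Rightarrow> ('s \<Rightarrow> real \<Rightarrow> real) \<Rightarrow> 's \<Rightarrow> real \<Rightarrow> real" where
  "posterior Theta q \<pi> s \<theta> = q \<theta> * \<pi> s \<theta> / (\<Sum>\<theta>'\<in>Theta. q \<theta>' * \<pi> s \<theta>')"

definition pay :: "real set \<Rightarrow> (real \<Rightarrow> real) set \<Rightarrow> 's \<Rightarrow> (real \<Rightarrow> real) \<Rightarrow> ('s \<Rightarrow> real \<Rightarrow> real) \<Rightarrow> real" where
  "pay Theta A s q \<pi> = Max ((\<lambda>a. \<Sum>\<theta>\<in>Theta. posterior Theta q \<pi> s \<theta> * a \<theta>) ` A)"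

definition avg_pay :: "real set \<Rightarrow> (real \<Rightarrow> real) set \<Rightarrow> (real \<Rightarrow> real) \<Rightarrow> (real \<Rightarrow> real) \<Rightarrow> 's set \<Rightarrow> ('s \<Rightarrow> real \<Rightarrow> real) \<Rightarrow> real" where
  "avg_pay Theta A p q S \<pi> = (\<Sum>\<theta>\<in>Theta. p \<theta> * (\<Sum>s\<in>S. \<pi> s \<theta> * pay Theta A s q \<pi>))"

definition LR_ge :: "real set \<Rightarrow> (real \<Rightarrow> real) \<Rightarrow> (real \<Rightarrow> real) \<Rightarrow> bool" where
  "LR_ge Theta q' q \<longleftrightarrow> (\<forall>\<theta>\<in>Theta. \<forall>\<theta>'\<in>Theta. \<theta>' > \<theta> \<longrightarrow> q \<theta> * q' \<theta>' \<ge> q \<theta>' * q' \<theta>)"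

end

theory Submission
  imports Defs
begin

lemma lr_expect:
  fixes u u' a :: "real \<Rightarrow> real"
  assumes fin: "finite T"
    and lr: "\<forall>x\<in>T. \<forall>y\<in>T. x < y \<longrightarrow> u x * u' y \<ge> u y * u' x"
    and mono: "\<forall>x\<in>T. \<forall>y\<in>T. x < y \<longrightarrow> a x < a y"
  shows "(\<Sum>x\<in>T. u' x) * (\<Sum>y\<in>T. u y * a y) \<le> (\<Sum>x\<in>T. u x) * (\<Sum>y\<in>T. u' y * a y)"
proof -
  define G where "G x y = u x * u' y * (a y - a x)" for x y
  have key: "0 \<le> G x y + G y x" if "x \<in> T" "y \<in> T" for x y
  proof -
    have e: "G x y + G y x = (a y - a x) * (u x * u' y - u y * u' x)"
      unfolding G_def by (simp add: algebra_simps)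
    consider "x < y" | "x = y" | "y < x" by linarith
    then show ?thesis
    proof cases
      case 1
      then have "a x < a y" "u x * u' y \<ge> u y * u' x" using lr mono that by auto
      then show ?thesis unfolding e by (intro mult_nonneg_nonneg) auto
    next
      case 2 then show ?thesis unfolding G_def by simp
    next
      case 3
      then have "a y < a x" "u y * u' x \<ge> u x * u' y" using lr mono that by auto
      then show ?thesis unfolding e by (intro mult_nonpos_nonpos) auto
    qed
  qed
  have diff: "(\<Sum>x\<in>T. u x) * (\<Sum>y\<in>T. u' y * a y) - (\<Sum>x\<in>T. u' x) * (\<Sum>y\<in>T. u y * a y)
      = (\<Sum>x\<in>T. \<Sum>y\<in>T. G x y)"
  proof -
    have "(\<Sum>x\<in>T. u x) * (\<Sum>y\<in>T. u' y * a y) = (\<Sum>x\<in>T. \<Sum>y\<in>T. u x * u' y * a y)"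
      by (simp add: sum_product mult.assoc)
    moreover have "(\<Sum>x\<in>T. u' x) * (\<Sum>y\<in>T. u y * a y) = (\<Sum>y\<in>T. \<Sum>x\<in>T. u' y * u x * a x)"
      by (simp add: sum_product mult.assoc)
    moreover have "(\<Sum>y\<in>T. \<Sum>x\<in>T. u' y * u x * a x) = (\<Sum>x\<in>T. \<Sum>y\<in>T. u' y * u x * a x)"
      by (rule sum.swap)
    ultimately show ?thesis unfolding G_def
      by (simp add: sum_subtractf[symmetric] algebra_simps)
  qed
  have "2 * (\<Sum>x\<in>T. \<Sum>y\<in>T. G x y) = (\<Sum>x\<in>T. \<Sum>y\<in>T. G x y) + (\<Sum>y\<in>T. \<Sum>x\<in>T. G x y)"
    using sum.swap[of G T T] by simp
  also have "\<dots> = (\<Sum>x\<in>T. \<Sum>y\<in>T. G x y + G y x)"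
    using sum.swap[of "\<lambda>y x. G x y" T T] by (simp add: sum.distrib)
  also have "\<dots> \<ge> 0" using key by (intro sum_nonneg) auto
  finally show ?thesis using diff by linarith
qed

lemma Max_pointwise_le:
  fixes f g :: "'a \<Rightarrow> real"
  assumes "finite A" "A \<noteq> {}" "\<forall>a\<in>A. f a \<le> g a"
  shows "Max (f ` A) \<le> Max (g ` A)"
proof -
  have "Max (f ` A) \<in> f ` A" using assms by (intro Max_in) auto
  then obtain a where a: "a \<in> A" "Max (f ` A) = f a" by auto
  have "g a \<le> Max (g ` A)" using assms a by (intro Max_ge) auto
  moreover have "f a \<le> g a" using assms a by auto
  ultimately show ?thesis using a(2) by linarith
qed

lemma Max_pointwise_less:
  fixes f g :: "'a \<Rightarrow> real"
  assumes "finite A" "A \<noteq> {}" "\<forall>a\<in>A. f a < g a"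
  shows "Max (f ` A) < Max (g ` A)"
proof -
  have "Max (f ` A) \<in> f ` A" using assms by (intro Max_in) auto
  then obtain a where a: "a \<in> A" "Max (f ` A) = f a" by auto
  have "g a \<le> Max (g ` A)" using assms a by (intro Max_ge) auto
  moreover have "f a < g a" using assms a by auto
  ultimately show ?thesis using a(2) by linarith
qed

lemma post_expect:
  fixes q :: "real \<Rightarrow> real" and \<pi> :: "'s \<Rightarrow> real \<Rightarrow> real"
  shows   "(\<Sum>y\<in>T. posterior T q \<pi> s y * a y) = (\<Sum>y\<in>T. q y * \<pi> s y * a y) / (\<Sum>y\<in>T. q y * \<pi> s y)"
  unfolding posterior_def by (simp add: sum_divide_distrib)

lemma denom_pos:
  fixes q :: "real \<Rightarrow> real" and \<pi> :: "'s \<Rightarrow> real \<Rightarrow> real"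
  assumes "finite T" "\<forall>y\<in>T. q y > 0" "\<forall>y\<in>T. \<pi> s y \<ge> 0" "\<exists>y\<in>T. \<pi> s y > 0"
  shows "(\<Sum>y\<in>T. q y * \<pi> s y) > 0"
proof -
  obtain y where "y \<in> T" "\<pi> s y > 0" using assms by auto
  moreover have "\<forall>y\<in>T. 0 \<le> q y * \<pi> s y" using assms
    by (metis less_eq_real_def mult_nonneg_nonneg)
  ultimately show ?thesis using assms
    by (intro sum_pos2[of T y]) auto
qed

lemma expect_le:
  fixes q q' :: "real \<Rightarrow> real" and \<pi> :: "'s \<Rightarrow> real \<Rightarrow> real" and a :: "real \<Rightarrow> real"
  assumes fin: "finite T" and fq: "full_support T q" and fq': "full_support T q'"
    and lr: "LR_ge T q' q" and ss: "signal_structure T S \<pi>" and s: "s \<in> S"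
    and ma: "monotone_task T a"
  shows "(\<Sum>y\<in>T. posterior T q \<pi> s y * a y) \<le> (\<Sum>y\<in>T. posterior T q' \<pi> s y * a y)"
proof -
  have pn: "\<forall>y\<in>T. \<pi> s y \<ge> 0" "\<exists>y\<in>T. \<pi> s y > 0"
    using ss s unfolding signal_structure_def by auto
  have qp: "\<forall>y\<in>T. q y > 0" "\<forall>y\<in>T. q' y > 0"
    using fq fq' unfolding full_support_def by auto
  define D where "D = (\<Sum>y\<in>T. q y * \<pi> s y)"
  define D' where "D' = (\<Sum>y\<in>T. q' y * \<pi> s y)"
  define N where "N = (\<Sum>y\<in>T. q y * \<pi> s y * a y)"
  define N' where "N' = (\<Sum>y\<in>T. q' y * \<pi> s y * a y)"
  have D: "D > 0" unfolding D_def using denom_pos[of T _ \<pi> s, OF fin qp(1) pn] by simp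
  have D': "D' > 0" unfolding D'_def using denom_pos[of T _ \<pi> s, OF fin qp(2) pn] by simp
  have lru: "\<forall>x\<in>T. \<forall>y\<in>T. x < y \<longrightarrow> (q x * \<pi> s x) * (q' y * \<pi> s y) \<ge> (q y * \<pi> s y) * (q' x * \<pi> s x)"
  proof (intro ballI impI)
    fix x y assume xy: "x \<in> T" "y \<in> T" "x < y"
    have "q x * q' y \<ge> q y * q' x" using lr xy unfolding LR_ge_def by auto
    moreover have "\<pi> s x * \<pi> s y \<ge> 0" using pn xy by auto
    ultimately have "(q y * q' x) * (\<pi> s x * \<pi> s y) \<le> (q x * q' y) * (\<pi> s x * \<pi> s y)"
      by (rule mult_right_mono)
    then show "(q x * \<pi> s x) * (q' y * \<pi> s y) \<ge> (q y * \<pi> s y) * (q' x * \<pi> s x)"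
      by (simp add: algebra_simps)
  qed
  have ma': "\<forall>x\<in>T. \<forall>y\<in>T. x < y \<longrightarrow> a x < a y" using ma unfolding monotone_task_def by auto
  have "D' * N \<le> D * N'"
    using lr_expect[OF fin lru ma'] unfolding D_def D'_def N_def N'_def by simp
  then have "N / D \<le> N' / D'" using D D' by (simp add: field_simps)
  then show ?thesis unfolding post_expect N_def N'_def D_def D'_def .
qed

lemma pay_le:
  fixes q q' :: "real \<Rightarrow> real" and \<pi> :: "'s \<Rightarrow> real \<Rightarrow> real"
  assumes fin: "finite T" and fq: "full_support T q" and fq': "full_support T q'"
    and lr: "LR_ge T q' q" and ss: "signal_structure T S \<pi>" and s: "s \<in> S"
    and mf: "monotone_firm T A"
  shows "pay T A s q \<pi> \<le> pay T A s q' \<pi>"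
  unfolding pay_def
  using mf expect_le[OF fin fq fq' lr ss s]
  by (intro Max_pointwise_le) (auto simp: monotone_firm_def)

lemma partA:
  fixes q q' p :: "real \<Rightarrow> real" and \<pi> :: "'s \<Rightarrow> real \<Rightarrow> real"
  assumes fin: "finite T" and fp: "full_support T p" and fq: "full_support T q" and fq': "full_support T q'"
    and lr: "LR_ge T q' q" and ss: "signal_structure T S \<pi>"
    and mf: "monotone_firm T A"
  shows "avg_pay T A p q S \<pi> \<le> avg_pay T A p q' S \<pi>"
  unfolding avg_pay_def
proof (intro sum_mono mult_left_mono)
  fix y s assume y: "y \<in> T" and s: "s \<in> S"
  show "pay T A s q \<pi> \<le> pay T A s q' \<pi>" by (rule pay_le[OF fin fq fq' lr ss s mf])
  show "0 \<le> \<pi> s y" using ss s y unfolding signal_structure_def by auto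
next
  fix y assume "y \<in> T" then show "0 \<le> p y" using fp unfolding full_support_def by (auto intro: less_imp_le)
qed


lemma two_point_sum:
  fixes q g \<rho> :: "real \<Rightarrow> real"
  assumes "finite T" "t \<in> T" "t' \<in> T" "t \<noteq> t'"
    and "\<forall>y\<in>T. \<rho> y = (if y \<in> {t, t'} then 1 else 0)"
  shows "(\<Sum>y\<in>T. q y * \<rho> y * g y) = q t * g t + q t' * g t'"
proof -
  have "(\<Sum>y\<in>T. q y * \<rho> y * g y) = (\<Sum>y\<in>T. if y \<in> {t, t'} then q y * g y else 0)"
    using assms(5) by (intro sum.cong) auto
  also have "\<dots> = (\<Sum>y\<in>T \<inter> {t, t'}. q y * g y)"
    using assms(1) by (simp add: sum.inter_restrict)
  also have "T \<inter> {t, t'} = {t, t'}" using assms by auto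
  finally show ?thesis using assms(4) by simp
qed

lemma point_post:
  fixes q :: "real \<Rightarrow> real" and \<pi> :: "'s \<Rightarrow> real \<Rightarrow> real"
  assumes "finite T" "x \<in> T" "q x > 0" "\<forall>y\<in>T. \<pi> s y = (if y = x then 1 else 0)"
  shows "\<forall>y\<in>T. posterior T q \<pi> s y = (if y = x then 1 else 0)"
proof -
  have "(\<Sum>y\<in>T. q y * \<pi> s y) = (\<Sum>y\<in>T. if y = x then q y else 0)"
    using assms(4) by (intro sum.cong) auto
  also have "\<dots> = q x" using assms(1,2) by (simp add: sum.delta)
  finally have D: "(\<Sum>y\<in>T. q y * \<pi> s y) = q x" .
  show ?thesis unfolding posterior_def D using assms(3,4) by auto
qed

lemma pay_cong:
  fixes q q' :: "real \<Rightarrow> real" and \<pi> :: "'s \<Rightarrow> real \<Rightarrow> real"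
  assumes "\<forall>y\<in>T. posterior T q \<pi> s y = posterior T q' \<pi> s y"
  shows "pay T A s q \<pi> = pay T A s q' \<pi>"
proof -
  have "(\<lambda>a. \<Sum>y\<in>T. posterior T q \<pi> s y * a y) = (\<lambda>a. \<Sum>y\<in>T. posterior T q' \<pi> s y * a y)"
    using assms by (intro ext sum.cong) auto
  then show ?thesis unfolding pay_def by (simp only:)
qed


lemma two_point_strict:
  fixes q q' :: "real \<Rightarrow> real" and \<alpha> \<beta> :: real
  assumes "q t > 0" "q t' > 0" "q' t > 0" "q' t' > 0" "\<alpha> < \<beta>"
    and lt: "q t * q' t' < q t' * q' t"
  shows "(q' t * \<alpha> + q' t' * \<beta>) / (q' t + q' t') < (q t * \<alpha> + q t' * \<beta>) / (q t + q t')"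
proof -
  have d1: "q' t + q' t' > 0" and d2: "q t + q t' > 0" using assms by auto
  have "0 < (\<beta> - \<alpha>) * (q t' * q' t - q t * q' t')"
    using assms by (intro mult_pos_pos) auto
  moreover have "(q t * \<alpha> + q t' * \<beta>) * (q' t + q' t') - (q' t * \<alpha> + q' t' * \<beta>) * (q t + q t')
     = (\<beta> - \<alpha>) * (q t' * q' t - q t * q' t')" by (simp add: algebra_simps)
  ultimately have "(q' t * \<alpha> + q' t' * \<beta>) * (q t + q t') < (q t * \<alpha> + q t' * \<beta>) * (q' t + q' t')"
    by linarith
  then show ?thesis using d1 d2 by (simp add: divide_less_eq less_divide_eq mult.commute mult.left_commute)
qed

lemma partB:
  fixes p q q' :: "real \<Rightarrow> real"
  assumes fin: "finite T" and fp: "full_support T p" and fq: "full_support T q"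
    and fq': "full_support T q'" and nlr: "\<not> LR_ge T q' q"
  shows "\<exists>(S :: nat set) \<pi>. signal_structure T S \<pi> \<and>
           (\<forall>A. monotone_firm T A \<longrightarrow> avg_pay T A p q' S \<pi> < avg_pay T A p q S \<pi>)"
proof -
  obtain t t' where tt: "t \<in> T" "t' \<in> T" "t < t'" and lt: "q t * q' t' < q t' * q' t"
    using nlr unfolding LR_ge_def by (auto simp: not_le)
  define P where "P = {t, t'}"
  define f where "f = to_nat_on T"
  have inj: "inj_on f T" unfolding f_def using fin by (intro inj_on_to_nat_on countable_finite)
  define S :: "nat set" where "S = insert 0 ((\<lambda>x. Suc (f x)) ` (T - P))"
  define \<pi> :: "nat \<Rightarrow> real \<Rightarrow> real" where
    "\<pi> = (\<lambda>s x. if x \<in> P then (if s = 0 then 1 else 0) else (if s = Suc (f x) then 1 else 0))"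
  have qp: "\<forall>y\<in>T. q y > 0" and q'p: "\<forall>y\<in>T. q' y > 0" and pp: "\<forall>y\<in>T. p y > 0"
    using fq fq' fp unfolding full_support_def by auto
  have finS: "finite S" using fin by (simp add: S_def)
  have S0: "0 \<in> S" by (simp add: S_def)
  have sum1: "(\<Sum>s\<in>S. \<pi> s y) = 1" if y: "y \<in> T" for y
  proof (cases "y \<in> P")
    case True
    then have "(\<Sum>s\<in>S. \<pi> s y) = (\<Sum>s\<in>S. if s = 0 then 1 else 0)" by (simp add: \<pi>_def)
    also have "\<dots> = 1" using finS S0 by simp
    finally show ?thesis .
  next
    case False
    then have "(\<Sum>s\<in>S. \<pi> s y) = (\<Sum>s\<in>S. if s = Suc (f y) then 1 else 0)" by (simp add: \<pi>_def)
    also have "\<dots> = 1" using finS False y by (simp add: S_def)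
    finally show ?thesis .
  qed
  have pos: "\<exists>y\<in>T. \<pi> s y > 0" if sS: "s \<in> S" for s
  proof (cases "s = 0")
    case True then show ?thesis using tt by (auto simp: \<pi>_def P_def)
  next
    case False
    then obtain x where "x \<in> T - P" "s = Suc (f x)" using sS by (auto simp: S_def)
    then show ?thesis by (auto simp: \<pi>_def intro!: bexI[of _ x])
  qed
  have ss: "signal_structure T S \<pi>"
    unfolding signal_structure_def using finS S0 sum1 pos by (auto simp: \<pi>_def)
  have pi0: "\<forall>y\<in>T. \<pi> 0 y = (if y \<in> {t, t'} then 1 else 0)" by (simp add: \<pi>_def P_def)
  have pix: "\<forall>y\<in>T. \<pi> s y = (if y = x then 1 else 0)" if "x \<in> T - P" "s = Suc (f x)" for x s
  proof
    fix y assume y: "y \<in> T"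
    show "\<pi> s y = (if y = x then 1 else 0)"
    proof (cases "y \<in> P")
      case True then show ?thesis using that by (auto simp: \<pi>_def)
    next
      case False
      have "(Suc (f x) = Suc (f y)) = (x = y)" using inj y that by (auto dest: inj_onD)
      then show ?thesis using False that by (auto simp: \<pi>_def)
    qed
  qed
  have pay_eq: "pay T A s q' \<pi> = pay T A s q \<pi>" if sS: "s \<in> S" "s \<noteq> 0" for A s
  proof -
    obtain x where x: "x \<in> T - P" "s = Suc (f x)" using sS by (auto simp: S_def)
    have "\<forall>y\<in>T. posterior T q' \<pi> s y = (if y = x then 1 else 0)"
      using point_post[of T x q' \<pi> s, OF fin _ _ pix[OF x]] x q'p by auto
    moreover have "\<forall>y\<in>T. posterior T q \<pi> s y = (if y = x then 1 else 0)"
      using point_post[of T x q \<pi> s, OF fin _ _ pix[OF x]] x qp by auto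
    ultimately show ?thesis by (intro pay_cong) auto
  qed
  have tne: "t \<noteq> t'" using tt by simp
  have expect0: "(\<Sum>y\<in>T. posterior T r \<pi> 0 y * a y) = (r t * a t + r t' * a t') / (r t + r t')" for r a
  proof -
    have "(\<Sum>y\<in>T. r y * \<pi> 0 y * a y) = r t * a t + r t' * a t'"
      by (rule two_point_sum[OF fin tt(1,2) tne pi0])
    moreover have "(\<Sum>y\<in>T. r y * \<pi> 0 y * 1) = r t * 1 + r t' * 1"
      by (rule two_point_sum[OF fin tt(1,2) tne pi0])
    ultimately show ?thesis unfolding post_expect by simp
  qed
  have pay_lt: "pay T A 0 q' \<pi> < pay T A 0 q \<pi>" if mf: "monotone_firm T A" for A
    unfolding pay_def
  proof (rule Max_pointwise_less)
    show "finite A" "A \<noteq> {}" using mf by (auto simp: monotone_firm_def)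
    show "\<forall>a\<in>A. (\<Sum>y\<in>T. posterior T q' \<pi> 0 y * a y) < (\<Sum>y\<in>T. posterior T q \<pi> 0 y * a y)"
    proof
      fix a assume "a \<in> A"
      then have "a t < a t'" using mf tt unfolding monotone_firm_def monotone_task_def by auto
      then show "(\<Sum>y\<in>T. posterior T q' \<pi> 0 y * a y) < (\<Sum>y\<in>T. posterior T q \<pi> 0 y * a y)"
        unfolding expect0 using qp q'p tt lt by (intro two_point_strict) auto
    qed
  qed
  have pay_le: "pay T A s q' \<pi> \<le> pay T A s q \<pi>" if "monotone_firm T A" "s \<in> S" for A s
    using pay_eq[of s A] pay_lt[OF that(1)] that by (cases "s = 0") auto
  have "avg_pay T A p q' S \<pi> < avg_pay T A p q S \<pi>" if mf: "monotone_firm T A" for A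
    unfolding avg_pay_def
  proof (rule sum_strict_mono_ex1[OF fin])
    have pin: "0 \<le> \<pi> s y" for s y by (simp add: \<pi>_def)
    show "\<forall>y\<in>T. p y * (\<Sum>s\<in>S. \<pi> s y * pay T A s q' \<pi>) \<le> p y * (\<Sum>s\<in>S. \<pi> s y * pay T A s q \<pi>)"
    proof (rule ballI, rule mult_left_mono)
      fix y assume "y \<in> T"
      show "(\<Sum>s\<in>S. \<pi> s y * pay T A s q' \<pi>) \<le> (\<Sum>s\<in>S. \<pi> s y * pay T A s q \<pi>)"
        using pay_le[OF mf] pin by (intro sum_mono mult_left_mono) auto
      show "0 \<le> p y" using pp \<open>y \<in> T\<close> by (auto intro: less_imp_le)
    qed
    have "(\<Sum>s\<in>S. \<pi> s t * pay T A s q' \<pi>) < (\<Sum>s\<in>S. \<pi> s t * pay T A s q \<pi>)"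
    proof (rule sum_strict_mono_ex1[OF finS])
      show "\<forall>s\<in>S. \<pi> s t * pay T A s q' \<pi> \<le> \<pi> s t * pay T A s q \<pi>"
        using pay_le[OF mf] pin by (auto intro!: mult_left_mono)
      have "\<pi> 0 t = 1" by (simp add: \<pi>_def P_def)
      then show "\<exists>s\<in>S. \<pi> s t * pay T A s q' \<pi> < \<pi> s t * pay T A s q \<pi>"
        using S0 pay_lt[OF mf] by (intro bexI[of _ 0]) auto
    qed
    then show "\<exists>y\<in>T. p y * (\<Sum>s\<in>S. \<pi> s y * pay T A s q' \<pi>) < p y * (\<Sum>s\<in>S. \<pi> s y * pay T A s q \<pi>)"
      using pp tt by (intro bexI[of _ t] mult_strict_left_mono) auto
  qed
  then show ?thesis using ss by blast
qed

theorem lemma1: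
  fixes Theta :: "real set" and p q q' :: "real \<Rightarrow> real"
  assumes "finite Theta" and "card Theta \<ge> 2"
    and "full_support Theta p" and "full_support Theta q" and "full_support Theta q'"
  shows "(LR_ge Theta q' q \<longrightarrow>
            (\<forall>(S :: 's set) \<pi> A. signal_structure Theta S \<pi> \<and> monotone_firm Theta A \<longrightarrow>
               avg_pay Theta A p q' S \<pi> \<ge> avg_pay Theta A p q S \<pi>))
       \<and> (\<not> LR_ge Theta q' q \<longrightarrow>
            (\<exists>(S :: nat set) \<pi>. signal_structure Theta S \<pi> \<and>
               (\<forall>A. monotone_firm Theta A \<longrightarrow>
                  avg_pay Theta A p q' S \<pi> < avg_pay Theta A p q S \<pi>)))"
  using partA[OF assms(1,3,4,5)] partB[OF assms(1,3,4,5)] by blast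

end
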